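(* Let $f(x)=\frac1n\sum_{i=1}^n f_i(x)$ on $\mathbb{R}^d$ with each $f_i$ convex and $L$-smooth, and let $x_0$ satisfy $\|x_0-x^\star\|\le R_0$ for some minimizer $x^\star$ of $f$. Run the following algorithm (Acc-SVRG-G) with $p_k\equiv\frac1n$ and $\tau_k\equiv1-\frac{1}{\sqrt{n+1}}$: set $z_0=\tilde x_0=x_0$, $\alpha_k=\frac{L\tau_k}{1-\tau_k}$, and for $k=0,1,\dots$: $y_k=\tau_kz_k+(1-\tau_k)(\tilde x_k-\frac1L\nabla f(\tilde x_k))$; $z_{k+1}=\arg\min_x\{\langle\mathcal G_k,x\rangle+\frac{\alpha_k}2\|x-z_k\|^2\}$ with $\mathcal G_k=\nabla f_{i_k}(y_k)-\nabla f_{i_k}(\tilde x_k)+\nabla f(\tilde x_k)$ and $i_k$ uniform on $\{1,\dots,n\}$; $\tilde x_{k+1}=y_k$ with probability $p_k$, else $\tilde x_{k+1}=\tilde x_k$. Let $N$ be the first iteration at which $\tilde x_{N+1}=y_N$ is chosen, and terminate at iteration $N$. Then $$\mathbb E\|\nabla f(\tilde x_{N+1})\|^2\le\frac{8L^2R_0^2}{5(\sqrt{n+1}+1)}\quad\text{and}\quad\mathbb E[f(\tilde x_{N+1})]-f(x^\star)\le\frac{LR_0^2}{\sqrt{n+1}+1}.$$ In particular, if $\epsilon_g^2\ge\frac{8L^2R_0^2}{5(\sqrt{n+1}+1)}$ and $\epsilon_f\ge\frac{LR_0^2}{\sqrt{n+1}+1}$, the algorithm achieves these accuracies with an $O(n)$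 expected oracle complexity.
   Context: $L$-smooth means $L$-Lipschitz gradient. Oracle complexity is the expected number of component gradient evaluations $\nabla f_i$; a full gradient costs $n$ evaluations. *)

theory Defs
  imports "HOL-Probability.Probability"
begin

definition favg :: "nat \<Rightarrow> (nat \<Rightarrow> 'a \<Rightarrow> real) \<Rightarrow> 'a \<Rightarrow> real" where
  "favg n f x = (1 / real n) * (\<Sum>i<n. f i x)"

definition grad_avg :: "nat \<Rightarrow> (nat \<Rightarrow> 'a \<Rightarrow> 'a) \<Rightarrow> 'a \<Rightarrow> 'a::real_vector" where
  "grad_avg n g x = (1 / real n) *\<^sub>R (\<Sum>i<n. g i x)"

definition svrg_y :: "nat \<Rightarrow> real \<Rightarrow> (nat \<Rightarrow> 'a \<Rightarrow> 'a) \<Rightarrow> real \<Rightarrow> 'a \<Rightarrow> 'a \<Rightarrow> 'a::real_vector" where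
  "svrg_y n L g \<tau> z xt = \<tau> *\<^sub>R z + (1 - \<tau>) *\<^sub>R (xt - (1 / L) *\<^sub>R grad_avg n g xt)"

text \<open>State (z_k, xt_k) of Acc-SVRG-G with constant tau, driven by the random sequence
  omega k = (i_k, b_k): sampled component i_k and the coin b_k (true: xt_{k+1} = y_k).\<close>

primrec svrg_state :: "nat \<Rightarrow> real \<Rightarrow> (nat \<Rightarrow> 'a \<Rightarrow> 'a) \<Rightarrow> real \<Rightarrow> 'a \<Rightarrow>
    (nat \<Rightarrow> nat \<times> bool) \<Rightarrow> nat \<Rightarrow> 'a \<times> 'a::real_inner" where
  "svrg_state n L g \<tau> x0 \<omega> 0 = (x0, x0)"
| "svrg_state n L g \<tau> x0 \<omega> (Suc k) =
     (let (z, xt) = svrg_state n L g \<tau> x0 \<omega> k;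
          y = svrg_y n L g \<tau> z xt;
          i = fst (\<omega> k);
          G = g i y - g i xt + grad_avg n g xt;
          \<alpha> = L * \<tau> / (1 - \<tau>)
      in ((ARG_MIN (\<lambda>x. G \<bullet> x + \<alpha> / 2 * (norm (x - z))\<^sup>2) x. True),
          (if snd (\<omega> k) then y else xt)))"

definition svrg_N :: "(nat \<Rightarrow> nat \<times> bool) \<Rightarrow> nat" where
  "svrg_N \<omega> = (LEAST k. snd (\<omega> k))"

text \<open>Output xt_{N+1} = y_N.\<close>

definition svrg_output :: "nat \<Rightarrow> real \<Rightarrow> (nat \<Rightarrow> 'a \<Rightarrow> 'a) \<Rightarrow> real \<Rightarrow> 'a \<Rightarrow>
    (nat \<Rightarrow> nat \<times> bool) \<Rightarrow> 'a::real_inner" where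
  "svrg_output n L g \<tau> x0 \<omega> =
     (let (z, xt) = svrg_state n L g \<tau> x0 \<omega> (svrg_N \<omega>) in svrg_y n L g \<tau> z xt)"

definition svrg_space :: "nat \<Rightarrow> (nat \<Rightarrow> nat \<times> bool) measure" where
  "svrg_space n = (\<Pi>\<^sub>M k\<in>UNIV. measure_pmf (pair_pmf (pmf_of_set {..<n}) (bernoulli_pmf (1 / real n))))"

end

theory Submission
  imports Defs
begin
lemma line_deriv:
  fixes F :: "'a::real_inner \<Rightarrow> real"
  assumes "\<forall>x. (F has_derivative (\<lambda>h. G x \<bullet> h)) (at x)"
  shows "((\<lambda>t. F (x + t *\<^sub>R d)) has_real_derivative (G (x + t *\<^sub>R d) \<bullet> d)) (at t)"
proof -
  have "((\<lambda>t. x + t *\<^sub>R d) has_derivative (\<lambda>s. s *\<^sub>R d)) (at t)"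
    by (auto intro!: derivative_eq_intros)
  from has_derivative_compose[OF this assms[rule_format, of "x + t *\<^sub>R d"]]
  have "((\<lambda>t. F (x + t *\<^sub>R d)) has_derivative (\<lambda>s. G (x + t *\<^sub>R d) \<bullet> (s *\<^sub>R d))) (at t)" .
  moreover have "(\<lambda>s. G (x + t *\<^sub>R d) \<bullet> (s *\<^sub>R d)) = (*) (G (x + t *\<^sub>R d) \<bullet> d)"
    by (auto simp: fun_eq_iff)
  ultimately show ?thesis by (simp add: has_field_derivative_def)
qed

lemma first_order:
  fixes F :: "'a::real_inner \<Rightarrow> real"
  assumes cvx: "convex_on UNIV F" and der: "\<forall>x. (F has_derivative (\<lambda>h. G x \<bullet> h)) (at x)"
  shows "F y \<ge> F x + G x \<bullet> (y - x)"
proof -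
  let ?h = "\<lambda>t. F (x + t *\<^sub>R (y - x))"
  have c: "convex_on UNIV ?h"
  proof (rule convex_onI)
    fix t u :: real and a b assume "0 < t" "t < 1"
    have "x + ((1 - t) * a + t * b) *\<^sub>R (y - x) = (1 - t) *\<^sub>R (x + a *\<^sub>R (y - x)) + t *\<^sub>R (x + b *\<^sub>R (y - x))"
      by (simp add: algebra_simps)
    then show "?h ((1 - t) *\<^sub>R a + t *\<^sub>R b) \<le> (1 - t) * ?h a + t * ?h b"
      using convex_onD[OF cvx, of t "x + a *\<^sub>R (y - x)" "x + b *\<^sub>R (y - x)"] \<open>0<t\<close> \<open>t<1\<close> by simp
  qed simp
  have d: "(?h has_real_derivative (G x \<bullet> (y - x))) (at 0 within UNIV)"
    using line_deriv[OF der, of x "y - x" 0] by simp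
  have "?h 1 - ?h 0 \<ge> (G x \<bullet> (y - x)) * (1 - 0)"
    using convex_on_imp_above_tangent[OF c _ _ _ d, of 1] by simp
  then show ?thesis by simp
qed

lemma descent:
  fixes F :: "'a::real_inner \<Rightarrow> real"
  assumes der: "\<forall>x. (F has_derivative (\<lambda>h. G x \<bullet> h)) (at x)"
    and lip: "\<forall>x y. norm (G x - G y) \<le> L * norm (x - y)"
  shows "F y \<le> F x + G x \<bullet> (y - x) + L / 2 * (norm (y - x))\<^sup>2"
proof -
  let ?d = "y - x"
  let ?k = "\<lambda>t. F (x + t *\<^sub>R ?d) - t * (G x \<bullet> ?d) - L / 2 * t\<^sup>2 * (norm ?d)\<^sup>2"
  have "?k 0 \<ge> ?k 1"
  proof (rule DERIV_nonpos_imp_nonincreasing[where f="?k"])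
    fix t :: real assume t: "0 \<le> t" "t \<le> 1"
    have "(?k has_real_derivative (G (x + t *\<^sub>R ?d) \<bullet> ?d - G x \<bullet> ?d - L / 2 * (2 * t) * (norm ?d)\<^sup>2)) (at t)"
      by (rule line_deriv[OF der] derivative_eq_intros refl | simp)+
    moreover have "G (x + t *\<^sub>R ?d) \<bullet> ?d - G x \<bullet> ?d - L / 2 * (2 * t) * (norm ?d)\<^sup>2 \<le> 0"
    proof -
      have "G (x + t *\<^sub>R ?d) \<bullet> ?d - G x \<bullet> ?d = (G (x + t *\<^sub>R ?d) - G x) \<bullet> ?d"
        by (simp add: inner_diff_left)
      also have "\<dots> \<le> norm (G (x + t *\<^sub>R ?d) - G x) * norm ?d" by (rule Cauchy_Schwarz_ineq2[THEN order_trans[OF abs_ge_self]])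
      also have "\<dots> \<le> (L * norm (t *\<^sub>R ?d)) * norm ?d"
        using lip[rule_format, of "x + t *\<^sub>R ?d" x] by (intro mult_right_mono) auto
      also have "\<dots> = L / 2 * (2 * t) * (norm ?d)\<^sup>2" using t by (simp add: power2_eq_square)
      finally show ?thesis by simp
    qed
    ultimately show "\<exists>y. (?k has_real_derivative y) (at t) \<and> y \<le> 0" by blast
  qed simp
  then show ?thesis by (simp add: algebra_simps)
qed

lemma cocoercive:
  fixes F :: "'a::real_inner \<Rightarrow> real"
  assumes cvx: "convex_on UNIV F" and der: "\<forall>x. (F has_derivative (\<lambda>h. G x \<bullet> h)) (at x)"
    and lip: "\<forall>x y. norm (G x - G y) \<le> L * norm (x - y)" and L: "L > 0"
  shows "F y \<ge> F x + G x \<bullet> (y - x) + (norm (G y - G x))\<^sup>2 / (2 * L)"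
proof -
  define \<phi> where "\<phi> z = F z - G x \<bullet> z" for z
  have der2: "\<forall>z. (\<phi> has_derivative (\<lambda>h. (G z - G x) \<bullet> h)) (at z)"
  proof
    fix z
    have "(\<phi> has_derivative (\<lambda>h. G z \<bullet> h - G x \<bullet> h)) (at z)"
      unfolding \<phi>_def by (rule derivative_eq_intros der[rule_format] refl)+
    then show "(\<phi> has_derivative (\<lambda>h. (G z - G x) \<bullet> h)) (at z)" by (simp add: inner_diff_left)
  qed
  have lip2: "\<forall>a b. norm ((G a - G x) - (G b - G x)) \<le> L * norm (a - b)" using lip by simp
  define w where "w = y - (1 / L) *\<^sub>R (G y - G x)"
  have "\<phi> w \<le> \<phi> y + (G y - G x) \<bullet> (w - y) + L / 2 * (norm (w - y))\<^sup>2"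
    by (rule descent[OF der2 lip2])
  also have "\<dots> = \<phi> y - (norm (G y - G x))\<^sup>2 / (2 * L)"
  proof -
    define v where "v = G y - G x"
    have wy: "w - y = (- 1 / L) *\<^sub>R v" by (simp add: w_def v_def)
    have "(G y - G x) \<bullet> (w - y) = - (norm v)\<^sup>2 / L" unfolding wy v_def[symmetric]
      by (simp add: power2_norm_eq_inner)
    moreover have "(norm (w - y))\<^sup>2 = (norm v)\<^sup>2 / L\<^sup>2" unfolding wy using L
      by (simp add: power_divide power2_eq_square)
    ultimately show ?thesis using L by (simp add: v_def power2_eq_square field_simps)
  qed
  finally have 1: "\<phi> w \<le> \<phi> y - (norm (G y - G x))\<^sup>2 / (2 * L)" .
  have "F w \<ge> F x + G x \<bullet> (w - x)" by (rule first_order[OF cvx der])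
  then have "\<phi> x \<le> \<phi> w" by (simp add: \<phi>_def inner_diff_right)
  with 1 show ?thesis by (simp add: \<phi>_def inner_diff_right)
qed

lemma sq_step:
  fixes e G :: "'a::real_inner"
  assumes "\<alpha> > 0"
  shows "\<alpha> / 2 * (norm (e - (1 / \<alpha>) *\<^sub>R G))\<^sup>2 = \<alpha> / 2 * (norm e)\<^sup>2 - G \<bullet> e + (norm G)\<^sup>2 / (2 * \<alpha>)"
proof -
  have "(norm (e - (1 / \<alpha>) *\<^sub>R G))\<^sup>2 = (norm e)\<^sup>2 - 2 * (1 / \<alpha>) * (G \<bullet> e) + (1 / \<alpha>) * (1 / \<alpha>) * (norm G)\<^sup>2"
    by (simp add: power2_norm_eq_inner inner_diff_left inner_diff_right inner_commute algebra_simps)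
  then show ?thesis using assms by (simp add: field_simps power2_eq_square)
qed

lemma sq_add: fixes a b :: "'a::real_inner" shows "(norm (a + b))\<^sup>2 = (norm a)\<^sup>2 + 2 * (a \<bullet> b) + (norm b)\<^sup>2"
  by (simp add: power2_norm_eq_inner inner_add_left inner_add_right inner_commute)

locale setting =
  fixes f :: "nat \<Rightarrow> 'a::euclidean_space \<Rightarrow> real"
    and g :: "nat \<Rightarrow> 'a \<Rightarrow> 'a"
    and n :: nat and L :: real and xstar :: 'a
  assumes n_pos: "n \<ge> 1"
    and L_pos: "L > 0"
    and convex: "\<forall>i<n. convex_on UNIV (f i)"
    and gradient: "\<forall>i<n. \<forall>x. (f i has_derivative (\<lambda>h. g i x \<bullet> h)) (at x)"
    and smooth: "\<forall>i<n. \<forall>x y. norm (g i x - g i y) \<le> L * norm (x - y)"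
    and minimizer: "\<forall>x. favg n f xstar \<le> favg n f x"
begin

abbreviation "F \<equiv> favg n f"
abbreviation "GF \<equiv> grad_avg n g"

lemma F_convex: "convex_on UNIV F"
proof (rule convex_onI)
  fix t :: real and a b :: 'a assume t: "0 < t" "t < 1"
  have "(\<Sum>i<n. f i ((1 - t) *\<^sub>R a + t *\<^sub>R b)) \<le> (\<Sum>i<n. (1 - t) * f i a + t * f i b)"
    using convex t by (intro sum_mono) (auto intro: convex_onD)
  also have "(\<Sum>i<n. (1 - t) * f i a + t * f i b) = (1 - t) * (\<Sum>i<n. f i a) + t * (\<Sum>i<n. f i b)"
    by (simp add: sum.distrib sum_distrib_left)
  finally have "(1 / real n) * (\<Sum>i<n. f i ((1 - t) *\<^sub>R a + t *\<^sub>R b)) \<le> (1 / real n) * ((1 - t) * (\<Sum>i<n. f i a) + t * (\<Sum>i<n. f i b))"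
    by (intro mult_left_mono) auto
  then show "F ((1 - t) *\<^sub>R a + t *\<^sub>R b) \<le> (1 - t) * F a + t * F b"
    unfolding favg_def by (simp only: distrib_left mult.assoc mult.left_commute[of "1 / real n"])
qed simp

lemma F_deriv: "\<forall>x. (F has_derivative (\<lambda>h. GF x \<bullet> h)) (at x)"
proof
  fix x
  have "((\<lambda>x. \<Sum>i<n. f i x) has_derivative (\<lambda>h. \<Sum>i<n. g i x \<bullet> h)) (at x)"
    using gradient by (auto intro!: has_derivative_sum)
  then have "((\<lambda>x. (1 / real n) * (\<Sum>i<n. f i x)) has_derivative (\<lambda>h. (1 / real n) * (\<Sum>i<n. g i x \<bullet> h))) (at x)"
    by (rule has_derivative_mult_right)
  then show "(F has_derivative (\<lambda>h. GF x \<bullet> h)) (at x)"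
    unfolding favg_def[abs_def] grad_avg_def by (simp add: inner_sum_left)
qed

lemma F_lip: "\<forall>x y. norm (GF x - GF y) \<le> L * norm (x - y)"
proof (intro allI)
  fix x y
  have "GF x - GF y = (1 / real n) *\<^sub>R (\<Sum>i<n. g i x - g i y)"
    by (simp add: grad_avg_def sum_subtractf scaleR_diff_right)
  then have "norm (GF x - GF y) = (1 / real n) * norm (\<Sum>i<n. g i x - g i y)" by simp
  also have "\<dots> \<le> (1 / real n) * (\<Sum>i<n. norm (g i x - g i y))"
    by (intro mult_left_mono norm_sum) auto
  also have "\<dots> \<le> (1 / real n) * (\<Sum>i<n. L * norm (x - y))"
    using smooth by (intro mult_left_mono sum_mono) auto
  also have "\<dots> = L * norm (x - y)" using n_pos by simp
  finally show "norm (GF x - GF y) \<le> L * norm (x - y)" .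
qed

lemma F_cocoercive: "F y \<ge> F x + GF x \<bullet> (y - x) + (norm (GF y - GF x))\<^sup>2 / (2 * L)"
  by (rule cocoercive[OF F_convex F_deriv F_lip L_pos])

lemma f_cocoercive: "i < n \<Longrightarrow> f i y \<ge> f i x + g i x \<bullet> (y - x) + (norm (g i y - g i x))\<^sup>2 / (2 * L)"
  using convex gradient smooth by (intro cocoercive[OF _ _ _ L_pos]) auto

lemma GF_xstar: "GF xstar = 0"
proof -
  let ?w = "xstar - (1 / L) *\<^sub>R GF xstar"
  have "F ?w \<le> F xstar + GF xstar \<bullet> (?w - xstar) + L / 2 * (norm (?w - xstar))\<^sup>2"
    by (rule descent[OF F_deriv F_lip])
  also have "\<dots> = F xstar - (norm (GF xstar))\<^sup>2 / (2 * L)"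
  proof -
    have wy: "?w - xstar = (- 1 / L) *\<^sub>R GF xstar" by simp
    have "GF xstar \<bullet> (?w - xstar) = - (norm (GF xstar))\<^sup>2 / L" unfolding wy
      by (simp add: power2_norm_eq_inner)
    moreover have "(norm (?w - xstar))\<^sup>2 = (norm (GF xstar))\<^sup>2 / L\<^sup>2" unfolding wy using L_pos
      by (simp add: power_divide power2_eq_square)
    ultimately show ?thesis using L_pos by (simp add: power2_eq_square field_simps)
  qed
  finally have "(norm (GF xstar))\<^sup>2 / (2 * L) \<le> 0" using minimizer[rule_format, of ?w] by simp
  then have "(norm (GF xstar))\<^sup>2 \<le> 0" using L_pos by (simp add: divide_le_0_iff)
  then show ?thesis by simp
qed

lemma F_upper: "F x - F xstar \<le> L / 2 * (norm (x - xstar))\<^sup>2"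
  using descent[OF F_deriv F_lip, of x xstar] GF_xstar by simp

lemma grad_bound: "(norm (GF x))\<^sup>2 \<le> 2 * L * (F x - F xstar)"
  using F_cocoercive[of xstar x] GF_xstar L_pos by (simp add: field_simps)


lemma step_ineq:
  fixes z x0 :: 'a
  assumes tau: "0 < \<tau>" "\<tau> < 1"
  defines "\<alpha> \<equiv> L * \<tau> / (1 - \<tau>)" and "y \<equiv> svrg_y n L g \<tau> z x0"
  shows "(1 + (1 - \<tau>) / \<tau>) * (F y - F xstar) + (norm (GF y))\<^sup>2 / (2 * L)
     + (1 / real n) * (\<Sum>i<n. \<alpha> / 2 * (norm (z - (1 / \<alpha>) *\<^sub>R (g i y - g i x0 + GF x0) - xstar))\<^sup>2)
     \<le> \<alpha> / 2 * (norm (z - xstar))\<^sup>2 + (1 - \<tau>) / \<tau> * (F x0 - F xstar)"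
proof -
  define tp where "tp = (1 - \<tau>) / \<tau>"
  have tp_pos: "tp > 0" using tau by (simp add: tp_def)
  have a_pos: "\<alpha> > 0" using tau L_pos by (simp add: \<alpha>_def)
  have a_inv: "1 / (2 * \<alpha>) = tp / (2 * L)" using tau L_pos by (simp add: \<alpha>_def tp_def field_simps)
  define u where "u = GF y"
  define v where "v = GF x0"
  define w where "w = x0 - (1 / L) *\<^sub>R v"
  define e where "e = z - xstar"
  define D where "D = \<alpha> / 2 * (norm e)\<^sup>2"
  have y': "y = \<tau> *\<^sub>R z + (1 - \<tau>) *\<^sub>R w" by (simp add: y_def svrg_y_def w_def v_def)
  have yw: "y - w = \<tau> *\<^sub>R (z - w)" by (simp add: y' algebra_simps)
  have zy0: "z - y = (1 - \<tau>) *\<^sub>R (z - w)" by (simp add: y' algebra_simps)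
  have zy: "z - y = tp *\<^sub>R (y - w)" using tau by (simp add: zy0 yw tp_def)
  have ue: "u \<bullet> e = u \<bullet> (y - xstar) + tp * (u \<bullet> (y - x0)) + (tp / L) * (u \<bullet> v)"
  proof -
    have "e = (z - y) + (y - xstar)" by (simp add: e_def)
    then have "u \<bullet> e = tp * (u \<bullet> (y - w)) + u \<bullet> (y - xstar)" by (simp add: zy inner_add_right)
    moreover have "y - w = (y - x0) + (1 / L) *\<^sub>R v" by (simp add: w_def)
    ultimately show ?thesis by (simp add: inner_add_right algebra_simps)
  qed
  define R where "R i = D - g i y \<bullet> e + g i x0 \<bullet> e - v \<bullet> e + tp * f i x0 - tp * f i y - tp * (g i y \<bullet> (x0 - y))
      + (tp / L) * (g i y \<bullet> v) - (tp / L) * (g i x0 \<bullet> v) + tp / (2 * L) * (norm v)\<^sup>2" for i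
  have per: "\<alpha> / 2 * (norm (z - (1 / \<alpha>) *\<^sub>R (g i y - g i x0 + GF x0) - xstar))\<^sup>2 \<le> R i" if i: "i < n" for i
  proof -
    define X where "X = g i y - g i x0"
    have 1: "\<alpha> / 2 * (norm (z - (1 / \<alpha>) *\<^sub>R (g i y - g i x0 + GF x0) - xstar))\<^sup>2
        = D - (X + v) \<bullet> e + (norm (X + v))\<^sup>2 / (2 * \<alpha>)"
    proof -
      have "z - (1 / \<alpha>) *\<^sub>R (g i y - g i x0 + GF x0) - xstar = e - (1 / \<alpha>) *\<^sub>R (X + v)"
        by (simp add: e_def X_def v_def algebra_simps)
      then show ?thesis using sq_step[OF a_pos, of e "X + v"] by (simp add: D_def)
    qed
    have 2: "(norm (X + v))\<^sup>2 = (norm X)\<^sup>2 + 2 * (X \<bullet> v) + (norm v)\<^sup>2" by (rule sq_add)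
    have 3: "(norm X)\<^sup>2 \<le> 2 * L * (f i x0 - f i y - g i y \<bullet> (x0 - y))"
    proof -
      have "f i x0 \<ge> f i y + g i y \<bullet> (x0 - y) + (norm (g i x0 - g i y))\<^sup>2 / (2 * L)"
        by (rule f_cocoercive[OF i])
      moreover have "norm (g i x0 - g i y) = norm X" by (simp add: X_def norm_minus_commute)
      ultimately show ?thesis using L_pos by (simp add: field_simps)
    qed
    have "(norm (X + v))\<^sup>2 / (2 * \<alpha>) = tp / (2 * L) * (norm (X + v))\<^sup>2"
      using a_inv by (metis times_divide_eq_left mult.commute mult_1)
    also have "\<dots> \<le> tp / (2 * L) * (2 * L * (f i x0 - f i y - g i y \<bullet> (x0 - y)) + 2 * (X \<bullet> v) + (norm v)\<^sup>2)"
      unfolding 2 using 3 tp_pos L_pos by (intro mult_left_mono) auto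
    also have "\<dots> = tp * (f i x0 - f i y - g i y \<bullet> (x0 - y)) + (tp / L) * (X \<bullet> v) + tp / (2 * L) * (norm v)\<^sup>2"
      using L_pos by (simp add: field_simps)
    finally have 4: "(norm (X + v))\<^sup>2 / (2 * \<alpha>) \<le> \<dots>" .
    show ?thesis unfolding 1 R_def using 4
      by (simp add: X_def inner_add_left inner_diff_left algebra_simps)
  qed
  have avg: "(1 / real n) * (\<Sum>i<n. \<alpha> / 2 * (norm (z - (1 / \<alpha>) *\<^sub>R (g i y - g i x0 + GF x0) - xstar))\<^sup>2)
      \<le> (1 / real n) * (\<Sum>i<n. R i)"
    using per by (intro mult_left_mono sum_mono) auto
  have lin: "(1 / real n) * (\<Sum>i<n. g i p \<bullet> c) = GF p \<bullet> c" for p c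
    by (simp add: grad_avg_def inner_sum_left)
  have linf: "(1 / real n) * (\<Sum>i<n. f i p) = F p" for p
    by (simp add: favg_def)
  have Ravg: "(1 / real n) * (\<Sum>i<n. R i) = D - u \<bullet> e + tp * F x0 - tp * F y - tp * (u \<bullet> (x0 - y))
      + (tp / L) * (u \<bullet> v) - (tp / L) * (v \<bullet> v) + tp / (2 * L) * (norm v)\<^sup>2"
  proof -
    define B where "B = real n * D - (\<Sum>i<n. g i y \<bullet> e) + (\<Sum>i<n. g i x0 \<bullet> e) - real n * (v \<bullet> e)
       + tp * (\<Sum>i<n. f i x0) - tp * (\<Sum>i<n. f i y) - tp * (\<Sum>i<n. g i y \<bullet> (x0 - y))
       + (tp / L) * (\<Sum>i<n. g i y \<bullet> v) - (tp / L) * (\<Sum>i<n. g i x0 \<bullet> v) + real n * (tp / (2 * L) * (norm v)\<^sup>2)"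
    have "(\<Sum>i<n. R i) = B"
      unfolding R_def B_def by (simp add: sum.distrib sum_subtractf sum_distrib_left)
    moreover have npos: "real n > 0" using n_pos by simp
    moreover have "(1 / real n) * B = D - (1 / real n) * (\<Sum>i<n. g i y \<bullet> e) + (1 / real n) * (\<Sum>i<n. g i x0 \<bullet> e) - (v \<bullet> e)
       + tp * ((1 / real n) * (\<Sum>i<n. f i x0)) - tp * ((1 / real n) * (\<Sum>i<n. f i y)) - tp * ((1 / real n) * (\<Sum>i<n. g i y \<bullet> (x0 - y)))
       + (tp / L) * ((1 / real n) * (\<Sum>i<n. g i y \<bullet> v)) - (tp / L) * ((1 / real n) * (\<Sum>i<n. g i x0 \<bullet> v)) + (tp / (2 * L) * (norm v)\<^sup>2)"
      unfolding B_def using npos L_pos by (simp add: field_simps)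
    ultimately have "(1 / real n) * (\<Sum>i<n. R i) = D - (1 / real n) * (\<Sum>i<n. g i y \<bullet> e) + (1 / real n) * (\<Sum>i<n. g i x0 \<bullet> e) - (v \<bullet> e)
       + tp * ((1 / real n) * (\<Sum>i<n. f i x0)) - tp * ((1 / real n) * (\<Sum>i<n. f i y)) - tp * ((1 / real n) * (\<Sum>i<n. g i y \<bullet> (x0 - y)))
       + (tp / L) * ((1 / real n) * (\<Sum>i<n. g i y \<bullet> v)) - (tp / L) * ((1 / real n) * (\<Sum>i<n. g i x0 \<bullet> v)) + (tp / (2 * L) * (norm v)\<^sup>2)"
      by simp
    then show ?thesis unfolding lin linf u_def[symmetric] v_def[symmetric] by simp
  qed
  have coc: "F xstar \<ge> F y + u \<bullet> (xstar - y) + (norm u)\<^sup>2 / (2 * L)"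
    using F_cocoercive[of y xstar] GF_xstar by (simp add: u_def norm_minus_commute)
  have i1: "u \<bullet> (xstar - y) = - (u \<bullet> (y - xstar))" by (simp add: inner_diff_right)
  have i2: "u \<bullet> (x0 - y) = - (u \<bullet> (y - x0))" by (simp add: inner_diff_right)
  have i3: "v \<bullet> v = (norm v)\<^sup>2" by (simp add: power2_norm_eq_inner)
  have nv: "tp / (2 * L) * (norm v)\<^sup>2 \<ge> 0" using tp_pos L_pos by simp
  have e3: "(tp / L) * (norm v)\<^sup>2 = 2 * (tp / (2 * L) * (norm v)\<^sup>2)" by simp
  show ?thesis
    using avg Ravg coc i1 i2 i3 nv e3 ue
    unfolding tp_def[symmetric] D_def[symmetric] e_def[symmetric] u_def[symmetric]
    by (simp add: algebra_simps)
qed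

end

primrec zz :: "('s \<Rightarrow> nat \<Rightarrow> 's) \<Rightarrow> 's \<Rightarrow> (nat \<Rightarrow> nat \<times> bool) \<Rightarrow> nat \<Rightarrow> 's" where
  "zz st z \<omega> 0 = z"
| "zz st z \<omega> (Suc k) = st (zz st z \<omega> k) (fst (\<omega> k))"

lemma zz_shift: "zz st z (case_nat a \<omega>) (Suc k) = zz st (st z (fst a)) \<omega> k"
  by (induction k) auto

lemma shift_integral:
  fixes \<mu> :: "(nat \<times> bool) pmf" and F :: "(nat \<Rightarrow> nat \<times> bool) \<Rightarrow> ennreal"
  assumes [measurable]: "F \<in> borel_measurable (PiM UNIV (\<lambda>_. measure_pmf \<mu>))"
  shows "(\<integral>\<^sup>+ \<omega>. F \<omega> \<partial>PiM UNIV (\<lambda>_. measure_pmf \<mu>))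
     = (\<integral>\<^sup>+ a. (\<integral>\<^sup>+ \<omega>. F (case_nat a \<omega>) \<partial>PiM UNIV (\<lambda>_. measure_pmf \<mu>)) \<partial>measure_pmf \<mu>)"
proof -
  interpret prob_space "measure_pmf \<mu>" by (rule prob_space_measure_pmf)
  interpret S: sequence_space "measure_pmf \<mu>" ..
  interpret P: pair_sigma_finite "measure_pmf \<mu>" "\<Pi>\<^sub>M i::nat\<in>UNIV. measure_pmf \<mu>" ..
  have "(\<integral>\<^sup>+ \<omega>. F \<omega> \<partial>S.S) = (\<integral>\<^sup>+X. F ((\<lambda>(s, \<omega>). case_nat s \<omega>) X) \<partial>(measure_pmf \<mu> \<Otimes>\<^sub>M S.S))"
    by (subst S.PiM_iter[symmetric]) (simp add: nn_integral_distr)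
  also have "\<dots> = (\<integral>\<^sup>+x. \<integral>\<^sup>+X. F ((\<lambda>(s, \<omega>). case_nat s \<omega>) (x, X)) \<partial>S.S \<partial>measure_pmf \<mu>)"
    by (subst S.nn_integral_fst) simp_all
  finally show ?thesis by simp
qed

lemma zz_measurable:
  assumes st_meas: "\<And>i. (\<lambda>z. st z i) \<in> S \<rightarrow>\<^sub>M S" and z: "z \<in> space S"
  shows "(\<lambda>\<omega>. zz st z \<omega> k) \<in> PiM UNIV (\<lambda>_. measure_pmf \<mu>) \<rightarrow>\<^sub>M S"
proof (induction k)
  case 0
  then show ?case using z by simp
next
  case (Suc k)
  have "(\<lambda>\<omega>. (\<lambda>i \<omega>. st (zz st z \<omega> k) i) (fst (\<omega> k)) \<omega>) \<in> PiM UNIV (\<lambda>_. measure_pmf \<mu>) \<rightarrow>\<^sub>M S"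
  proof (rule measurable_compose_countable)
    fix i :: nat
    show "(\<lambda>\<omega>. st (zz st z \<omega> k) i) \<in> PiM UNIV (\<lambda>_. measure_pmf \<mu>) \<rightarrow>\<^sub>M S"
      by (rule measurable_compose[OF Suc st_meas])
  next
    show "(\<lambda>\<omega>. fst (\<omega> k)) \<in> PiM UNIV (\<lambda>_. measure_pmf \<mu>) \<rightarrow>\<^sub>M count_space UNIV"
    proof (rule measurable_compose[of "\<lambda>\<omega>. \<omega> k" _ "measure_pmf \<mu>"])
      show "(\<lambda>\<omega>. \<omega> k) \<in> PiM UNIV (\<lambda>_. measure_pmf \<mu>) \<rightarrow>\<^sub>M measure_pmf \<mu>"
        by (rule measurable_component_singleton) simp
    qed simp
  qed
  then show ?case by simp
qed

lemma prob_P: "prob_space (PiM UNIV (\<lambda>_. measure_pmf (\<mu> :: (nat \<times> bool) pmf)))"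
  by (intro prob_space_PiM prob_space_measure_pmf)

lemma H_measurable:
  assumes st_meas: "\<And>i. (\<lambda>z. st z i) \<in> S \<rightarrow>\<^sub>M S" and r_meas: "r \<in> borel_measurable S" and z: "z \<in> space S"
  shows "(\<lambda>\<omega>. if \<exists>k<K. snd (\<omega> k) then r (zz st z \<omega> (LEAST k. snd (\<omega> k))) else 0)
     \<in> borel_measurable (PiM UNIV (\<lambda>_. measure_pmf \<mu>))"
proof -
  have comp: "(\<lambda>\<omega>. snd (\<omega> k)) \<in> PiM UNIV (\<lambda>_. measure_pmf \<mu>) \<rightarrow>\<^sub>M count_space UNIV" for k
  proof (rule measurable_compose[of "\<lambda>\<omega>. \<omega> k" _ "measure_pmf \<mu>"])
    show "(\<lambda>\<omega>. \<omega> k) \<in> PiM UNIV (\<lambda>_. measure_pmf \<mu>) \<rightarrow>\<^sub>M measure_pmf \<mu>"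
      by (rule measurable_component_singleton) simp
  qed simp
  have [measurable]: "Measurable.pred (PiM UNIV (\<lambda>_. measure_pmf \<mu>)) (\<lambda>\<omega>. snd (\<omega> k))" for k
    using comp[of k] by (simp add: pred_def)
  have Lm: "(\<lambda>\<omega>::nat \<Rightarrow> nat \<times> bool. LEAST k. snd (\<omega> k)) \<in> PiM UNIV (\<lambda>_. measure_pmf \<mu>) \<rightarrow>\<^sub>M count_space UNIV"
    by measurable
  have [measurable]: "(\<lambda>\<omega>. r (zz st z \<omega> (LEAST k. snd (\<omega> k)))) \<in> borel_measurable (PiM UNIV (\<lambda>_. measure_pmf \<mu>))"
    by (rule measurable_compose_countable[OF _ Lm], rule measurable_compose[OF zz_measurable[OF st_meas z] r_meas])
  show ?thesis by measurable
qed

lemma comp_meas: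
  "(\<lambda>\<omega>::nat \<Rightarrow> nat \<times> bool. \<omega> k) \<in> PiM UNIV (\<lambda>_. measure_pmf \<mu>) \<rightarrow>\<^sub>M count_space UNIV"
proof (rule measurable_compose[of "\<lambda>\<omega>. \<omega> k" _ "measure_pmf \<mu>"])
  show "(\<lambda>\<omega>. \<omega> k) \<in> PiM UNIV (\<lambda>_. measure_pmf \<mu>) \<rightarrow>\<^sub>M measure_pmf \<mu>"
    by (rule measurable_component_singleton) simp
qed simp

lemma snd_pred[measurable]:
  "Measurable.pred (PiM (UNIV::nat set) (\<lambda>_. measure_pmf (\<mu>::(nat \<times> bool) pmf))) (\<lambda>\<omega>. snd (\<omega> k))"
  using measurable_compose[OF comp_meas[of k \<mu>], of snd] by (simp add: pred_def)

lemma coin_AE: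
  fixes \<mu> :: "(nat \<times> bool) pmf"
  assumes c: "(\<integral>\<^sup>+ a. (if snd a then 0 else 1) \<partial>measure_pmf \<mu>) = ennreal q" and q: "0 \<le> q" "q < 1"
  shows "AE \<omega> in PiM (UNIV::nat set) (\<lambda>_. measure_pmf \<mu>). \<exists>k. snd (\<omega> k)"
proof -
  let ?P = "PiM (UNIV::nat set) (\<lambda>_. measure_pmf \<mu>)"
  interpret P: prob_space ?P by (rule prob_P)
  define I where "I K \<omega> = (if \<forall>k<K. \<not> snd (\<omega> k) then 1 else 0 :: ennreal)" for K and \<omega> :: "nat \<Rightarrow> nat \<times> bool"
  have Im: "I K \<in> borel_measurable ?P" for K unfolding I_def[abs_def] by measurable
  have Q: "(\<integral>\<^sup>+ \<omega>. I K \<omega> \<partial>?P) = ennreal (q ^ K)" for K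
  proof (induction K)
    case 0
    then show ?case by (simp add: I_def P.emeasure_space_1)
  next
    case (Suc K)
    have "(\<integral>\<^sup>+ \<omega>. I (Suc K) \<omega> \<partial>?P) = (\<integral>\<^sup>+ a. (\<integral>\<^sup>+ \<omega>. I (Suc K) (case_nat a \<omega>) \<partial>?P) \<partial>measure_pmf \<mu>)"
      by (rule shift_integral[OF Im])
    also have "\<dots> = (\<integral>\<^sup>+ a. ennreal (q ^ K) * (if snd a then 0 else 1) \<partial>measure_pmf \<mu>)"
    proof (rule nn_integral_cong)
      fix a :: "nat \<times> bool"
      have "I (Suc K) (case_nat a \<omega>) = (if snd a then 0 else I K \<omega>)" for \<omega>
        unfolding I_def by (auto simp: less_Suc_eq_0_disj)
      then show "(\<integral>\<^sup>+ \<omega>. I (Suc K) (case_nat a \<omega>) \<partial>?P) = ennreal (q ^ K) * (if snd a then 0 else 1)"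
        using Suc by simp
    qed
    also have "\<dots> = ennreal (q ^ K) * ennreal q"
      by (subst nn_integral_cmult) (auto simp: c)
    also have "\<dots> = ennreal (q ^ Suc K)" using q by (simp add: ennreal_mult[symmetric] mult.commute)
    finally show ?case .
  qed
  let ?N = "{\<omega> \<in> space ?P. \<forall>k. \<not> snd (\<omega> k)}"
  have "{\<omega> \<in> space ?P. \<not> snd (\<omega> k)} \<in> sets ?P" for k
    using snd_pred[of k \<mu>] unfolding pred_def by (rule sets.sets_Collect_neg)
  then have Nm: "?N \<in> sets ?P" by (rule sets.sets_Collect_countable_All)
  have le: "emeasure ?P ?N \<le> ennreal (q ^ K)" for K
  proof -
    have "emeasure ?P ?N = (\<integral>\<^sup>+ \<omega>. indicator ?N \<omega> \<partial>?P)" using Nm by simp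
    also have "\<dots> \<le> (\<integral>\<^sup>+ \<omega>. I K \<omega> \<partial>?P)"
      by (intro nn_integral_mono) (auto simp: I_def split: split_indicator)
    finally show ?thesis using Q by simp
  qed
  have "(\<lambda>K. ennreal (q ^ K)) \<longlonglongrightarrow> ennreal 0"
    using q by (intro tendsto_ennrealI LIMSEQ_power_zero) auto
  then have "emeasure ?P ?N \<le> ennreal 0"
    by (rule LIMSEQ_le_const) (use le in auto)
  then have "?N \<in> null_sets ?P" using Nm by (simp add: null_sets_def)
  then show ?thesis by (rule AE_I'[where N="?N"]) auto
qed

lemma stopped_bound:
  fixes \<mu> :: "(nat \<times> bool) pmf" and st :: "'s \<Rightarrow> nat \<Rightarrow> 's" and r B :: "'s \<Rightarrow> ennreal" and S :: "'s measure"
  assumes st_meas: "\<And>i. (\<lambda>z. st z i) \<in> S \<rightarrow>\<^sub>M S" and r_meas: "r \<in> borel_measurable S"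
    and sup: "\<And>z. z \<in> space S \<Longrightarrow> (\<integral>\<^sup>+ a. (if snd a then r z else B (st z (fst a))) \<partial>measure_pmf \<mu>) \<le> B z"
    and z: "z \<in> space S"
  shows "(\<integral>\<^sup>+ \<omega>. (if \<exists>k. snd (\<omega> k) then r (zz st z \<omega> (LEAST k. snd (\<omega> k))) else 0) \<partial>PiM UNIV (\<lambda>_. measure_pmf \<mu>)) \<le> B z"
proof -
  let ?P = "PiM (UNIV::nat set) (\<lambda>_. measure_pmf \<mu>)"
  interpret P: prob_space ?P by (rule prob_P)
  define H where "H K z \<omega> = (if \<exists>k<K. snd (\<omega> k) then r (zz st z \<omega> (LEAST k. snd (\<omega> k))) else 0)" for K z \<omega>
  have Hm: "z \<in> space S \<Longrightarrow> H K z \<in> borel_measurable ?P" for K z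
    unfolding H_def[abs_def] by (rule H_measurable[OF st_meas r_meas])
  have stS: "z \<in> space S \<Longrightarrow> st z i \<in> space S" for z i
    using measurable_space[OF st_meas] by blast
  have rec: "(\<integral>\<^sup>+ \<omega>. H (Suc K) z \<omega> \<partial>?P) = (\<integral>\<^sup>+ a. (if snd a then r z else (\<integral>\<^sup>+ \<omega>. H K (st z (fst a)) \<omega> \<partial>?P)) \<partial>measure_pmf \<mu>)"
    if z: "z \<in> space S" for K z
  proof -
    have "(\<integral>\<^sup>+ \<omega>. H (Suc K) z \<omega> \<partial>?P) = (\<integral>\<^sup>+ a. (\<integral>\<^sup>+ \<omega>. H (Suc K) z (case_nat a \<omega>) \<partial>?P) \<partial>measure_pmf \<mu>)"
      by (rule shift_integral[OF Hm[OF z]])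
    also have "\<dots> = (\<integral>\<^sup>+ a. (if snd a then r z else (\<integral>\<^sup>+ \<omega>. H K (st z (fst a)) \<omega> \<partial>?P)) \<partial>measure_pmf \<mu>)"
    proof (rule nn_integral_cong)
      fix a :: "nat \<times> bool"
      show "(\<integral>\<^sup>+ \<omega>. H (Suc K) z (case_nat a \<omega>) \<partial>?P) = (if snd a then r z else (\<integral>\<^sup>+ \<omega>. H K (st z (fst a)) \<omega> \<partial>?P))"
      proof (cases "snd a")
        case True
        then have "H (Suc K) z (case_nat a \<omega>) = r z" for \<omega>
          unfolding H_def by (auto intro!: exI[of _ 0] simp: Least_eq_0)
        then show ?thesis using True by (simp add: P.emeasure_space_1)
      next
        case False
        have "H (Suc K) z (case_nat a \<omega>) = H K (st z (fst a)) \<omega>" for \<omega>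
        proof -
          have ex: "(\<exists>k<Suc K. snd (case_nat a \<omega> k)) \<longleftrightarrow> (\<exists>k<K. snd (\<omega> k))"
            using False by (auto simp: less_Suc_eq_0_disj)
          show ?thesis
          proof (cases "\<exists>k<K. snd (\<omega> k)")
            case True
            then obtain k where "snd (\<omega> k)" by blast
            then have "(LEAST k. snd (case_nat a \<omega> k)) = Suc (LEAST k. snd (\<omega> k))"
              using False by (subst Least_Suc[of _ "Suc k"]) auto
            then show ?thesis using True ex unfolding H_def by (simp del: zz.simps add: zz_shift)
          next
            case F2: False
            have n1: "\<not>(\<exists>k<Suc K. snd (case_nat a \<omega> k))" using ex F2 by blast
            show ?thesis unfolding H_def by (simp only: if_not_P[OF n1] if_not_P[OF F2])
          qed
        qed
        then show ?thesis using False by simp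
      qed
    qed
    finally show ?thesis .
  qed
  have bound: "\<forall>z\<in>space S. (\<integral>\<^sup>+ \<omega>. H K z \<omega> \<partial>?P) \<le> B z" for K
  proof (induction K)
    case 0
    then show ?case by (simp add: H_def)
  next
    case (Suc K)
    show ?case
    proof
      fix z assume z: "z \<in> space S"
      have "(\<integral>\<^sup>+ \<omega>. H (Suc K) z \<omega> \<partial>?P) \<le> (\<integral>\<^sup>+ a. (if snd a then r z else B (st z (fst a))) \<partial>measure_pmf \<mu>)"
        unfolding rec[OF z] using Suc stS[OF z] by (intro nn_integral_mono) auto
      also have "\<dots> \<le> B z" by (rule sup[OF z])
      finally show "(\<integral>\<^sup>+ \<omega>. H (Suc K) z \<omega> \<partial>?P) \<le> B z" .
    qed
  qed
  have sup_eq: "(if \<exists>k. snd (\<omega> k) then r (zz st z \<omega> (LEAST k. snd (\<omega> k))) else 0) = (SUP K. H K z \<omega>)" for \<omega>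
  proof (cases "\<exists>k. snd (\<omega> k)")
    case True
    then obtain k where k: "snd (\<omega> k)" by blast
    have "H K z \<omega> \<le> H (Suc k) z \<omega>" for K using k unfolding H_def by auto
    then have "(SUP K. H K z \<omega>) = H (Suc k) z \<omega>"
      by (intro antisym SUP_least SUP_upper) auto
    then show ?thesis using True k unfolding H_def by auto
  next
    case False
    then show ?thesis unfolding H_def by simp
  qed
  have inc: "incseq (\<lambda>K \<omega>. H K z \<omega>)"
    by (auto simp: incseq_def le_fun_def H_def intro: order.strict_trans2)
  have "(\<integral>\<^sup>+ \<omega>. (if \<exists>k. snd (\<omega> k) then r (zz st z \<omega> (LEAST k. snd (\<omega> k))) else 0) \<partial>?P)
     = (\<integral>\<^sup>+ \<omega>. (SUP K. H K z \<omega>) \<partial>?P)" by (simp add: sup_eq)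
  also have "\<dots> = (SUP K. (\<integral>\<^sup>+ \<omega>. H K z \<omega> \<partial>?P))"
    by (rule nn_integral_monotone_convergence_SUP[OF inc Hm[OF z]])
  also have "\<dots> \<le> B z" using bound z by (intro SUP_least) auto
  finally show ?thesis .
qed

lemma lip_cont: "(\<forall>x y. norm (G x - G y) \<le> L * norm (x - y)) \<Longrightarrow> L \<ge> 0 \<Longrightarrow> continuous_on UNIV G"
  by (intro lipschitz_on_continuous_on[of L] lipschitz_onI) (auto simp: dist_norm)

lemma argmin_eq:
  fixes G z :: "'a::real_inner"
  assumes a: "\<alpha> > 0"
  shows "(ARG_MIN (\<lambda>x. G \<bullet> x + \<alpha> / 2 * (norm (x - z))\<^sup>2) x. True) = z - (1 / \<alpha>) *\<^sub>R G"
proof -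
  define m where "m = z - (1 / \<alpha>) *\<^sub>R G"
  define \<phi> where "\<phi> x = G \<bullet> x + \<alpha> / 2 * (norm (x - z))\<^sup>2" for x
  have key: "\<phi> x = \<phi> m + \<alpha> / 2 * (norm (x - m))\<^sup>2" for x
  proof -
    have xz: "x - z = (x - m) - (1 / \<alpha>) *\<^sub>R G" by (simp add: m_def)
    have 1: "\<alpha> / 2 * (norm (x - z))\<^sup>2 = \<alpha> / 2 * (norm (x - m))\<^sup>2 - G \<bullet> (x - m) + (norm G)\<^sup>2 / (2 * \<alpha>)"
      unfolding xz by (rule sq_step[OF a])
    have mz: "m - z = 0 - (1 / \<alpha>) *\<^sub>R G" by (simp add: m_def)
    have 2: "\<alpha> / 2 * (norm (m - z))\<^sup>2 = (norm G)\<^sup>2 / (2 * \<alpha>)"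
      unfolding mz using sq_step[OF a, of 0 G] by simp
    show ?thesis unfolding \<phi>_def 1 2 by (simp add: inner_diff_right)
  qed
  have ge: "\<phi> m \<le> \<phi> y" for y
  proof -
    have "0 \<le> \<alpha> / 2 * (norm (y - m))\<^sup>2" using a by simp
    then show ?thesis using key[of y] by linarith
  qed
  have "(ARG_MIN \<phi> x. True) = m"
    unfolding arg_min_def is_arg_min_def
  proof (rule some_equality)
    show "True \<and> \<not> (\<exists>y. True \<and> \<phi> y < \<phi> m)" using ge by (auto simp: not_less)
  next
    fix x assume "True \<and> \<not> (\<exists>y. True \<and> \<phi> y < \<phi> x)"
    then have "\<phi> x \<le> \<phi> m" by (auto simp: not_less)
    then have "\<alpha> / 2 * (norm (x - m))\<^sup>2 \<le> 0" using key[of x] by linarith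
    then have "(norm (x - m))\<^sup>2 \<le> 0" using a by (simp add: mult_le_0_iff)
    then show "x = m" by simp
  qed
  moreover have "\<phi> = (\<lambda>x. G \<bullet> x + \<alpha> / 2 * (norm (x - z))\<^sup>2)" by (simp add: \<phi>_def[abs_def])
  ultimately show ?thesis by (simp add: m_def)
qed

definition mu :: "nat \<Rightarrow> (nat \<times> bool) pmf" where
  "mu n = pair_pmf (pmf_of_set {..<n}) (bernoulli_pmf (1 / real n))"

lemma space_eq: "svrg_space n = PiM UNIV (\<lambda>_. measure_pmf (mu n))"
  by (simp add: svrg_space_def mu_def)

lemma int_mu:
  assumes n: "n \<ge> 1" and G: "\<And>a. G a \<ge> 0"
  shows "(\<integral>\<^sup>+ a. ennreal (G a) \<partial>measure_pmf (mu n))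
    = ennreal ((1 / real n) * (\<Sum>i<n. (1 / real n) * G (i, True) + (1 - 1 / real n) * G (i, False)))"
proof -
  have p: "0 \<le> 1 / real n" "1 / real n \<le> 1" using n by auto
  have "0 \<in> {..<n}" using n by simp
  then have ne: "{..<n} \<noteq> {}" by blast
  have "(\<integral>\<^sup>+ a. ennreal (G a) \<partial>measure_pmf (mu n))
      = (\<integral>\<^sup>+ i. (\<integral>\<^sup>+ b. ennreal (G (i, b)) \<partial>bernoulli_pmf (1 / real n)) \<partial>pmf_of_set {..<n})"
    unfolding mu_def by (rule nn_integral_pair_pmf')
  also have "\<dots> = (\<integral>\<^sup>+ i. ennreal ((1 / real n) * G (i, True) + (1 - 1 / real n) * G (i, False)) \<partial>pmf_of_set {..<n})"
  proof (rule nn_integral_cong)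
    fix i
    have "ennreal ((1 / real n) * G (i, True) + (1 - 1 / real n) * G (i, False))
        = ennreal (G (i, True)) * ennreal (1 / real n) + ennreal (G (i, False)) * ennreal (1 - 1 / real n)"
    proof -
      have q: "0 \<le> 1 - 1 / real n" using p by simp
      have "ennreal ((1 / real n) * G (i, True) + (1 - 1 / real n) * G (i, False))
          = ennreal (G (i, True) * (1 / real n)) + ennreal (G (i, False) * (1 - 1 / real n))"
        using p G q by (subst ennreal_plus) (auto simp: mult.commute)
      also have "\<dots> = ennreal (G (i, True)) * ennreal (1 / real n) + ennreal (G (i, False)) * ennreal (1 - 1 / real n)"
        using ennreal_mult[OF G p(1)] ennreal_mult[OF G q] by simp
      finally show ?thesis .
    qed
    then show "(\<integral>\<^sup>+ b. ennreal (G (i, b)) \<partial>bernoulli_pmf (1 / real n)) = ennreal ((1 / real n) * G (i, True) + (1 - 1 / real n) * G (i, False))"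
      using p by (subst nn_integral_bernoulli_pmf) auto
  qed
  also have "\<dots> = (\<Sum>i<n. ennreal ((1 / real n) * G (i, True) + (1 - 1 / real n) * G (i, False))) / real n"
    using ne by (subst nn_integral_pmf_of_set) (auto simp: ennreal_of_nat_eq_real_of_nat)
  also have "\<dots> = ennreal (\<Sum>i<n. (1 / real n) * G (i, True) + (1 - 1 / real n) * G (i, False)) / ennreal (real n)"
    using p G by (subst sum_ennreal) (auto intro!: add_nonneg_nonneg simp: ennreal_of_nat_eq_real_of_nat)
  also have "\<dots> = ennreal ((\<Sum>i<n. (1 / real n) * G (i, True) + (1 - 1 / real n) * G (i, False)) / real n)"
    using p G n by (intro divide_ennreal sum_nonneg add_nonneg_nonneg mult_nonneg_nonneg) auto
  finally show ?thesis by simp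
qed


context setting begin

lemma output_eq:
  fixes \<tau> :: real and x0 :: 'a and \<omega> :: "nat \<Rightarrow> nat \<times> bool"
  assumes tau: "0 < \<tau>" "\<tau> < 1" and fst: "\<forall>k. fst (\<omega> k) < n"
  defines "st \<equiv> \<lambda>z i. z - (1 / (L * \<tau> / (1 - \<tau>))) *\<^sub>R (g (if i < n then i else 0) (svrg_y n L g \<tau> z x0)
              - g (if i < n then i else 0) x0 + GF x0)"
  shows "svrg_output n L g \<tau> x0 \<omega> = svrg_y n L g \<tau> (zz st x0 \<omega> (svrg_N \<omega>)) x0"
proof -
  have a: "L * \<tau> / (1 - \<tau>) > 0" using tau L_pos by simp
  have state: "(\<forall>j<k. \<not> snd (\<omega> j)) \<longrightarrow> svrg_state n L g \<tau> x0 \<omega> k = (zz st x0 \<omega> k, x0)" for k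
  proof (induction k)
    case 0
    then show ?case by simp
  next
    case (Suc k)
    show ?case
    proof
      assume h: "\<forall>j<Suc k. \<not> snd (\<omega> j)"
      then have IH: "svrg_state n L g \<tau> x0 \<omega> k = (zz st x0 \<omega> k, x0)" using Suc by auto
      have nk: "\<not> snd (\<omega> k)" using h by auto
      have ik: "(if fst (\<omega> k) < n then fst (\<omega> k) else 0) = fst (\<omega> k)" using fst by simp
      have "svrg_state n L g \<tau> x0 \<omega> (Suc k) =
          (ARG_MIN (\<lambda>x. (g (fst (\<omega> k)) (svrg_y n L g \<tau> (zz st x0 \<omega> k) x0) - g (fst (\<omega> k)) x0 + grad_avg n g x0) \<bullet> x
              + L * \<tau> / (1 - \<tau>) / 2 * (norm (x - zz st x0 \<omega> k))\<^sup>2) x. True,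
           if snd (\<omega> k) then svrg_y n L g \<tau> (zz st x0 \<omega> k) x0 else x0)"
        by (simp only: svrg_state.simps IH Let_def prod.case)
      also have "\<dots> = (zz st x0 \<omega> (Suc k), x0)"
        by (simp only: argmin_eq[OF a] nk if_False zz.simps st_def ik)
      finally show "svrg_state n L g \<tau> x0 \<omega> (Suc k) = (zz st x0 \<omega> (Suc k), x0)" .
    qed
  qed
  have "\<forall>j<svrg_N \<omega>. \<not> snd (\<omega> j)"
    unfolding svrg_N_def using not_less_Least by blast
  then have "svrg_state n L g \<tau> x0 \<omega> (svrg_N \<omega>) = (zz st x0 \<omega> (svrg_N \<omega>), x0)" using state by blast
  then show ?thesis by (simp add: svrg_output_def)
qed


lemma AE_fst: "AE \<omega> in svrg_space n. \<forall>k. fst (\<omega> k) < n"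
proof -
  have "0 \<in> {..<n}" using n_pos by simp
  then have ne: "{..<n} \<noteq> {}" by blast
  have "AE a in measure_pmf (mu n). fst a < n"
    using ne by (simp add: AE_measure_pmf_iff mu_def set_pair_pmf)
  then have "AE \<omega> in PiM UNIV (\<lambda>_. measure_pmf (mu n)). fst (\<omega> k) < n" for k :: nat
    by (intro AE_PiM_component[where P="\<lambda>a. fst a < n"]) (auto intro: prob_space_measure_pmf)
  then show ?thesis unfolding space_eq by (simp add: AE_all_countable)
qed

lemma AE_coin: "AE \<omega> in svrg_space n. \<exists>k. snd (\<omega> k)"
proof -
  have "(\<integral>\<^sup>+ a. (if snd a then 0 else 1) \<partial>measure_pmf (mu n))
      = (\<integral>\<^sup>+ a. ennreal (if snd a then 0 else 1) \<partial>measure_pmf (mu n))"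
    by (rule nn_integral_cong) simp
  also have "\<dots> = ennreal ((1 / real n) * (\<Sum>i<n. (1 / real n) * 0 + (1 - 1 / real n) * 1))"
    using int_mu[OF n_pos, of "\<lambda>a. if snd a then 0 else 1"] by simp
  also have "\<dots> = ennreal (1 - 1 / real n)" using n_pos by simp
  finally have c: "(\<integral>\<^sup>+ a. (if snd a then 0 else 1) \<partial>measure_pmf (mu n)) = ennreal (1 - 1 / real n)" .
  have "0 \<le> 1 - 1 / real n" "1 - 1 / real n < 1" using n_pos by auto
  from coin_AE[OF c this] show ?thesis unfolding space_eq .
qed

lemma main_bound:
  fixes \<tau> \<kappa> :: real and x0 :: 'a and h :: "'a \<Rightarrow> real"
  assumes tau: "0 < \<tau>" "\<tau> < 1" and hc: "continuous_on UNIV h" and hnn: "\<forall>y. 0 \<le> h y" and kp: "\<kappa> \<ge> 0"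
    and hle: "\<forall>y. h y \<le> \<kappa> * ((1 + (1 - \<tau>) / \<tau>) * (F y - F xstar) + (norm (GF y))\<^sup>2 / (2 * L))"
  shows "(\<integral>\<^sup>+ \<omega>. ennreal (h (svrg_output n L g \<tau> x0 \<omega>)) \<partial>svrg_space n)
    \<le> ennreal (\<kappa> * ((1 - \<tau>) / \<tau> * (F x0 - F xstar) + (1 / real n) * (L * \<tau> / (1 - \<tau>) / 2 * (norm (x0 - xstar))\<^sup>2)))"
proof -
  define \<alpha> where "\<alpha> = L * \<tau> / (1 - \<tau>)"
  define cl where "cl i = (if i < n then i else 0)" for i :: nat
  define yy where "yy z = svrg_y n L g \<tau> z x0" for z
  define st where "st z i = z - (1 / \<alpha>) *\<^sub>R (g (cl i) (yy z) - g (cl i) x0 + GF x0)" for z i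
  define E0 where "E0 = (1 - \<tau>) / \<tau> * (F x0 - F xstar)"
  define D where "D z = \<alpha> / 2 * (norm (z - xstar))\<^sup>2" for z
  define r where "r z = ennreal (h (yy z))" for z
  define B where "B z = ennreal (\<kappa> * (E0 + (1 / real n) * D z))" for z
  have a: "\<alpha> > 0" using tau L_pos by (simp add: \<alpha>_def)
  have E0nn: "E0 \<ge> 0" using tau minimizer by (simp add: E0_def)
  have Dnn: "D z \<ge> 0" for z using a by (simp add: D_def)
  have cl_lt: "cl i < n" for i using n_pos by (simp add: cl_def)
  have gc: "continuous_on UNIV (g j)" if "j < n" for j
    using smooth that L_pos by (intro lip_cont[of _ L]) auto
  have yyc: "continuous_on UNIV yy" unfolding yy_def[abs_def] svrg_y_def by (intro continuous_intros)
  have stc: "continuous_on UNIV (\<lambda>z. st z i)" for i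
  proof -
    have "continuous_on UNIV (\<lambda>z. g (cl i) (yy z))"
      by (rule continuous_on_compose2[OF gc[OF cl_lt] yyc]) auto
    then show ?thesis unfolding st_def by (intro continuous_intros)
  qed
  have st_meas: "(\<lambda>z. st z i) \<in> borel \<rightarrow>\<^sub>M borel" for i
    by (rule borel_measurable_continuous_onI[OF stc])
  have [measurable]: "(\<lambda>z. h (yy z)) \<in> borel_measurable borel"
    by (rule borel_measurable_continuous_onI, rule continuous_on_compose2[OF hc yyc]) auto
  have r_meas: "r \<in> borel_measurable borel" unfolding r_def[abs_def] by measurable
  have sup: "(\<integral>\<^sup>+ a. (if snd a then r z else B (st z (fst a))) \<partial>measure_pmf (mu n)) \<le> B z" if "z \<in> space borel" for z
  proof -
    define Gf where "Gf a = (if snd a then h (yy z) else \<kappa> * (E0 + (1 / real n) * D (st z (fst a))))" for a :: "nat \<times> bool"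
    have Gnn: "Gf a \<ge> 0" for a using hnn kp E0nn Dnn by (simp add: Gf_def)
    have "(\<integral>\<^sup>+ a. (if snd a then r z else B (st z (fst a))) \<partial>measure_pmf (mu n))
        = (\<integral>\<^sup>+ a. ennreal (Gf a) \<partial>measure_pmf (mu n))"
      by (rule nn_integral_cong) (simp add: r_def B_def Gf_def)
    also have "\<dots> = ennreal ((1 / real n) * (\<Sum>i<n. (1 / real n) * Gf (i, True) + (1 - 1 / real n) * Gf (i, False)))"
      by (rule int_mu[OF n_pos Gnn])
    also have "\<dots> \<le> B z" unfolding B_def
    proof (rule ennreal_leI)
      define p where "p = 1 / real n"
      define A where "A = (1 / real n) * (\<Sum>i<n. D (st z i))"
      define \<Phi> where "\<Phi> = (1 + (1 - \<tau>) / \<tau>) * (F (yy z) - F xstar) + (norm (GF (yy z)))\<^sup>2 / (2 * L)"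
      have np: "real n > 0" using n_pos by simp
      have p01: "0 < p" "p \<le> 1" using n_pos by (auto simp: p_def)
      have Ann: "A \<ge> 0" using Dnn by (simp add: A_def sum_nonneg)
      have stp: "\<Phi> + A \<le> D z + E0"
      proof -
        have "(\<Sum>i<n. \<alpha> / 2 * (norm (z - (1 / \<alpha>) *\<^sub>R (g i (yy z) - g i x0 + GF x0) - xstar))\<^sup>2) = (\<Sum>i<n. D (st z i))"
          by (rule sum.cong) (auto simp: D_def st_def cl_def)
        then show ?thesis using step_ineq[OF tau, of z x0]
          unfolding \<Phi>_def A_def D_def E0_def \<alpha>_def yy_def by simp
      qed
      have hk: "h (yy z) \<le> \<kappa> * \<Phi>" using hle by (simp add: \<Phi>_def)
      have "(1 / real n) * (\<Sum>i<n. (1 / real n) * Gf (i, True) + (1 - 1 / real n) * Gf (i, False))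
          = p * h (yy z) + (1 - p) * \<kappa> * E0 + (1 - p) * \<kappa> * p * A"
      proof -
        have "(\<Sum>i<n. (1 / real n) * Gf (i, True) + (1 - 1 / real n) * Gf (i, False))
            = (\<Sum>i<n. (p * h (yy z) + (1 - p) * \<kappa> * E0) + ((1 - p) * \<kappa> * p) * D (st z i))"
          by (rule sum.cong) (use np in \<open>simp_all add: Gf_def p_def field_simps\<close>)
        also have "\<dots> = real n * (p * h (yy z) + (1 - p) * \<kappa> * E0) + (1 - p) * \<kappa> * p * (\<Sum>i<n. D (st z i))"
          by (simp add: sum.distrib sum_distrib_left)
        finally have "(\<Sum>i<n. (1 / real n) * Gf (i, True) + (1 - 1 / real n) * Gf (i, False))
            = real n * (p * h (yy z) + (1 - p) * \<kappa> * E0) + (1 - p) * \<kappa> * p * (\<Sum>i<n. D (st z i))" .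
        then show ?thesis using np by (simp add: A_def p_def field_simps)
      qed
      also have "\<dots> \<le> \<kappa> * (E0 + p * D z)"
      proof -
        have "\<kappa> * \<Phi> \<le> \<kappa> * (D z + E0 - A)" using stp kp by (intro mult_left_mono) auto
        then have "p * h (yy z) \<le> p * (\<kappa> * (D z + E0 - A))"
          using hk p01 by (intro mult_left_mono) auto
        moreover have "p * (\<kappa> * A) * p \<ge> 0" using p01 kp Ann by simp
        ultimately show ?thesis by (simp add: algebra_simps)
      qed
      finally show "(1 / real n) * (\<Sum>i<n. (1 / real n) * Gf (i, True) + (1 - 1 / real n) * Gf (i, False)) \<le> \<kappa> * (E0 + (1 / real n) * D z)"
        by (simp add: p_def)
    qed
    finally show ?thesis .
  qed
  have stb: "(\<integral>\<^sup>+ \<omega>. (if \<exists>k. snd (\<omega> k) then r (zz st x0 \<omega> (LEAST k. snd (\<omega> k))) else 0) \<partial>PiM UNIV (\<lambda>_. measure_pmf (mu n))) \<le> B x0"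
    by (rule stopped_bound[OF st_meas r_meas sup]) auto
  have st_eq: "st = (\<lambda>z i. z - (1 / (L * \<tau> / (1 - \<tau>))) *\<^sub>R (g (if i < n then i else 0) (svrg_y n L g \<tau> z x0)
              - g (if i < n then i else 0) x0 + GF x0))"
    by (simp add: fun_eq_iff st_def \<alpha>_def cl_def yy_def)
  have "(\<integral>\<^sup>+ \<omega>. ennreal (h (svrg_output n L g \<tau> x0 \<omega>)) \<partial>svrg_space n)
      = (\<integral>\<^sup>+ \<omega>. (if \<exists>k. snd (\<omega> k) then r (zz st x0 \<omega> (LEAST k. snd (\<omega> k))) else 0) \<partial>svrg_space n)"
  proof (rule nn_integral_cong_AE)
    show "AE \<omega> in svrg_space n. ennreal (h (svrg_output n L g \<tau> x0 \<omega>)) = (if \<exists>k. snd (\<omega> k) then r (zz st x0 \<omega> (LEAST k. snd (\<omega> k))) else 0)"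
      using AE_fst AE_coin
    proof eventually_elim
      case (elim \<omega>)
      then show ?case using output_eq[OF tau, of \<omega> x0] unfolding st_eq[symmetric]
        by (simp add: r_def yy_def svrg_N_def)
    qed
  qed
  also have "\<dots> \<le> B x0" using stb unfolding space_eq .
  finally show ?thesis by (simp add: B_def E0_def D_def \<alpha>_def)
qed

end

lemma zz_count: "zz (\<lambda>c i. Suc c) 0 \<omega> k = k"
  by (induction k) auto

lemma ex_pred: "Measurable.pred (PiM (UNIV::nat set) (\<lambda>_. measure_pmf (\<mu>::(nat \<times> bool) pmf))) (\<lambda>\<omega>. \<exists>k. snd (\<omega> k))"
  unfolding pred_def
  by (rule sets.sets_Collect_countable_Ex) (use snd_pred in \<open>auto simp: pred_def\<close>)

lemma count_bound:
  assumes n: "n \<ge> 1"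
  shows "(\<integral>\<^sup>+ \<omega>. ennreal (real n + 2 * (real (svrg_N \<omega>) + 1)) \<partial>svrg_space n) \<le> ennreal (3 * real n)"
proof -
  let ?P = "PiM (UNIV::nat set) (\<lambda>_. measure_pmf (mu n))"
  define X where "X \<omega> = (if \<exists>k. snd (\<omega> k) then ennreal (real (zz (\<lambda>c i. Suc c) 0 \<omega> (LEAST k. snd (\<omega> k))) + 1) else 0)" for \<omega> :: "nat \<Rightarrow> nat \<times> bool"
  have sup: "(\<integral>\<^sup>+ a. (if snd a then ennreal (real c + 1) else ennreal (real (Suc c) + real n)) \<partial>measure_pmf (mu n)) \<le> ennreal (real c + real n)" for c
  proof -
    have "(\<integral>\<^sup>+ a. (if snd a then ennreal (real c + 1) else ennreal (real (Suc c) + real n)) \<partial>measure_pmf (mu n))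
       = (\<integral>\<^sup>+ a. ennreal (if snd a then real c + 1 else real (Suc c) + real n) \<partial>measure_pmf (mu n))"
      by (rule nn_integral_cong) simp
    also have "\<dots> = ennreal ((1 / real n) * (\<Sum>i<n. (1 / real n) * (real c + 1) + (1 - 1 / real n) * (real (Suc c) + real n)))"
      using int_mu[OF n, of "\<lambda>a. if snd a then real c + 1 else real (Suc c) + real n"] by simp
    also have "(1 / real n) * (\<Sum>i<n. (1 / real n) * (real c + 1) + (1 - 1 / real n) * (real (Suc c) + real n)) = real c + real n"
      using n by (simp add: field_simps)
    finally show ?thesis by simp
  qed
  have X_le: "(\<integral>\<^sup>+ \<omega>. X \<omega> \<partial>?P) \<le> ennreal (real 0 + real n)"
    unfolding X_def
    by (rule stopped_bound[where S="count_space UNIV" and st="\<lambda>c i. Suc c" and r="\<lambda>c. ennreal (real c + 1)"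
          and B="\<lambda>c. ennreal (real c + real n)"]) (auto intro: sup simp del: ennreal_plus)
  have Xm: "X \<in> borel_measurable ?P"
  proof -
    have Lm: "(\<lambda>\<omega>::nat \<Rightarrow> nat \<times> bool. LEAST k. snd (\<omega> k)) \<in> ?P \<rightarrow>\<^sub>M count_space UNIV"
      by measurable
    have "(\<lambda>\<omega>. ennreal (real (LEAST k. snd (\<omega> k)) + 1)) \<in> borel_measurable ?P"
      using Lm by measurable
    then show ?thesis unfolding X_def zz_count
      by (intro measurable_If ex_pred) auto
  qed
  have "(\<integral>\<^sup>+ \<omega>. ennreal (real n + 2 * (real (svrg_N \<omega>) + 1)) \<partial>svrg_space n)
      = (\<integral>\<^sup>+ \<omega>. ennreal (real n) + 2 * X \<omega> \<partial>?P)"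
    unfolding space_eq[symmetric]
  proof (rule nn_integral_cong_AE)
    interpret setting "\<lambda>_ _. 0" "\<lambda>_ _. 0" n 1 0
      using n by unfold_locales (auto simp: favg_def convex_on_const)
    show "AE \<omega> in svrg_space n. ennreal (real n + 2 * (real (svrg_N \<omega>) + 1)) = ennreal (real n) + 2 * X \<omega>"
      using AE_coin
    proof eventually_elim
      case (elim \<omega>)
      then show ?case by (simp add: X_def zz_count svrg_N_def ennreal_plus ennreal_mult)
    qed
  qed
  also have "\<dots> = ennreal (real n) + 2 * (\<integral>\<^sup>+ \<omega>. X \<omega> \<partial>?P)"
    using Xm by (simp add: nn_integral_add nn_integral_cmult prob_space.emeasure_space_1[OF prob_P])
  also have "\<dots> \<le> ennreal (real n) + 2 * ennreal (real n)"
    using X_le by (intro add_left_mono mult_left_mono) auto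
  also have "\<dots> = ennreal (3 * real n)"
  proof -
    have "ennreal (3 * real n) = ennreal (real n + 2 * real n)" by simp
    also have "\<dots> = ennreal (real n) + ennreal (2 * real n)" by (rule ennreal_plus) auto
    also have "ennreal (2 * real n) = 2 * ennreal (real n)" by (simp add: ennreal_mult)
    finally show ?thesis by simp
  qed
  finally show ?thesis .
qed


theorem theorem5:
  fixes f :: "nat \<Rightarrow> 'a::euclidean_space \<Rightarrow> real"
    and g :: "nat \<Rightarrow> 'a \<Rightarrow> 'a"
    and n :: nat and L R0 :: real and x0 xstar :: 'a
  assumes n_pos: "n \<ge> 1"
    and L_pos: "L > 0"
    and convex: "\<forall>i<n. convex_on UNIV (f i)"
    and gradient: "\<forall>i<n. \<forall>x. (f i has_derivative (\<lambda>h. g i x \<bullet> h)) (at x)"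
    and smooth: "\<forall>i<n. \<forall>x y. norm (g i x - g i y) \<le> L * norm (x - y)"
    and minimizer: "\<forall>x. favg n f xstar \<le> favg n f x"
    and init: "norm (x0 - xstar) \<le> R0"
  shows "(\<integral>\<^sup>+ \<omega>. ennreal ((norm (grad_avg n g
              (svrg_output n L g (1 - 1 / sqrt (real n + 1)) x0 \<omega>)))\<^sup>2) \<partial>svrg_space n)
           \<le> ennreal (8 * L\<^sup>2 * R0\<^sup>2 / (5 * (sqrt (real n + 1) + 1)))
       \<and> (\<integral>\<^sup>+ \<omega>. ennreal (favg n f (svrg_output n L g (1 - 1 / sqrt (real n + 1)) x0 \<omega>)
              - favg n f xstar) \<partial>svrg_space n)
           \<le> ennreal (L * R0\<^sup>2 / (sqrt (real n + 1) + 1))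
       \<and> (\<integral>\<^sup>+ \<omega>. ennreal (real n + 2 * (real (svrg_N \<omega>) + 1)) \<partial>svrg_space n)
           \<le> ennreal (3 * real n)"
proof -
  interpret S: setting f g n L xstar
    using n_pos L_pos convex gradient smooth minimizer by unfold_locales
  define s where "s = sqrt (real n + 1)"
  define \<tau> where "\<tau> = 1 - 1 / sqrt (real n + 1)"
  define tp where "tp = (1 - \<tau>) / \<tau>"
  define Q where "Q = (norm (x0 - xstar))\<^sup>2"
  define fs where "fs = favg n f xstar"
  have s2: "s\<^sup>2 = real n + 1" by (simp add: s_def)
  have s1: "s > 1" unfolding s_def using n_pos by simp
  have s43: "s \<ge> 4 / 3"
  proof (rule ccontr)
    assume "\<not> s \<ge> 4 / 3"
    then have "s < 4 / 3" by simp
    then have "s\<^sup>2 < (4 / 3)\<^sup>2" using s1 by (intro power_strict_mono) auto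
    then show False using s2 n_pos by (simp add: power2_eq_square)
  qed
  have nn: "real n = s\<^sup>2 - 1" using s2 by simp
  have "\<tau> = 1 - 1 / s" unfolding \<tau>_def s_def ..
  then have tau_s: "\<tau> = (s - 1) / s" using s1 by (simp add: field_simps)
  have tau: "0 < \<tau>" "\<tau> < 1" using s1 by (auto simp: tau_s)
  have tp_s: "tp = 1 / (s - 1)" using s1 by (simp add: tp_def tau_s field_simps)
  have al_s: "L * \<tau> / (1 - \<tau>) = L * (s - 1)" using s1 by (simp add: tau_s field_simps)
  have tp_pos: "tp > 0" using s1 by (simp add: tp_s)
  have Q0: "Q \<ge> 0" by (simp add: Q_def)
  have QR: "Q \<le> R0\<^sup>2" unfolding Q_def using init by (intro power_mono) auto
  have Fd0: "favg n f x0 - fs \<ge> 0" using minimizer by (simp add: fs_def)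
  have Fd: "favg n f x0 - fs \<le> L / 2 * Q" using S.F_upper[of x0] by (simp add: fs_def Q_def)
  have key: "tp * (favg n f x0 - fs) + (1 / real n) * (L * \<tau> / (1 - \<tau>) / 2 * Q) \<le> L * Q * s / (s\<^sup>2 - 1)"
  proof -
    have "tp * (favg n f x0 - fs) \<le> tp * (L / 2 * Q)" using Fd tp_pos by (intro mult_left_mono) auto
    moreover have "tp * (L / 2 * Q) + (1 / real n) * (L * \<tau> / (1 - \<tau>) / 2 * Q) = L * Q * s / (s\<^sup>2 - 1)"
    proof -
      have ne: "s - 1 > 0" "s + 1 > 0" using s1 by auto
      have sf: "s\<^sup>2 - 1 = (s - 1) * (s + 1)" by (simp add: power2_eq_square algebra_simps)
      have nf: "real n = (s - 1) * (s + 1)" using nn sf by simp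
      have t2: "(1 / real n) * (L * (s - 1) / 2 * Q) = L * Q / (2 * (s + 1))"
        unfolding nf using s1 by (simp add: divide_simps; simp add: algebra_simps)
      have "1 / (s - 1) * (L / 2 * Q) + L * Q / (2 * (s + 1)) = L * Q * s / ((s - 1) * (s + 1))"
        using s1 by (simp add: divide_simps; simp add: algebra_simps)
      then show ?thesis unfolding tp_s al_s t2 sf by simp
    qed
    ultimately show ?thesis by linarith
  qed
  have Fc: "continuous_on UNIV (favg n f)"
    using S.F_deriv by (intro continuous_at_imp_continuous_on) (auto intro: has_derivative_continuous)
  have Gc: "continuous_on UNIV (grad_avg n g)"
    using S.F_lip L_pos by (intro lip_cont[of _ L]) auto
  have sfac: "s\<^sup>2 - 1 = (s - 1) * (s + 1)" by (simp add: power2_eq_square algebra_simps)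
  define \<kappa>2 where "\<kappa>2 = 1 / (1 + tp)"
  have k2: "\<kappa>2 \<ge> 0" "\<kappa>2 * (1 + tp) = 1" using tp_pos by (auto simp: \<kappa>2_def)
  have c2: "(\<integral>\<^sup>+ \<omega>. ennreal (favg n f (svrg_output n L g \<tau> x0 \<omega>) - favg n f xstar) \<partial>svrg_space n)
      \<le> ennreal (\<kappa>2 * ((1 - \<tau>) / \<tau> * (favg n f x0 - favg n f xstar) + (1 / real n) * (L * \<tau> / (1 - \<tau>) / 2 * (norm (x0 - xstar))\<^sup>2)))"
  proof (rule S.main_bound[OF tau])
    show "continuous_on UNIV (\<lambda>y. favg n f y - favg n f xstar)" using Fc by (intro continuous_intros)
    show "\<forall>y. 0 \<le> favg n f y - favg n f xstar" using minimizer by simp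
    show "0 \<le> \<kappa>2" by (rule k2)
    show "\<forall>y. favg n f y - favg n f xstar \<le> \<kappa>2 * ((1 + (1 - \<tau>) / \<tau>) * (favg n f y - favg n f xstar) + (norm (grad_avg n g y))\<^sup>2 / (2 * L))"
    proof
      fix y
      have "0 \<le> \<kappa>2 * ((norm (grad_avg n g y))\<^sup>2 / (2 * L))" using k2 L_pos by simp
      then show "favg n f y - favg n f xstar \<le> \<kappa>2 * ((1 + (1 - \<tau>) / \<tau>) * (favg n f y - favg n f xstar) + (norm (grad_avg n g y))\<^sup>2 / (2 * L))"
        using k2(2) unfolding tp_def by (simp add: distrib_left mult.assoc[symmetric])
    qed
  qed
  have b2: "\<kappa>2 * ((1 - \<tau>) / \<tau> * (favg n f x0 - favg n f xstar) + (1 / real n) * (L * \<tau> / (1 - \<tau>) / 2 * (norm (x0 - xstar))\<^sup>2))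
      \<le> L * R0\<^sup>2 / (sqrt (real n + 1) + 1)"
  proof -
    have "\<kappa>2 * ((1 - \<tau>) / \<tau> * (favg n f x0 - favg n f xstar) + (1 / real n) * (L * \<tau> / (1 - \<tau>) / 2 * (norm (x0 - xstar))\<^sup>2))
        \<le> \<kappa>2 * (L * Q * s / (s\<^sup>2 - 1))"
      using key k2 unfolding tp_def fs_def Q_def by (intro mult_left_mono) auto
    also have "\<dots> = L * Q / (s + 1)"
      using s1 unfolding \<kappa>2_def tp_s sfac by (simp add: divide_simps; simp add: algebra_simps)
    also have "\<dots> \<le> L * R0\<^sup>2 / (s + 1)"
      using QR L_pos s1 by (intro divide_right_mono mult_left_mono) auto
    finally show ?thesis by (simp add: s_def)
  qed
  define \<kappa>1 where "\<kappa>1 = 2 * L / (2 + tp)"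
  have k1: "\<kappa>1 \<ge> 0" "\<kappa>1 * (2 + tp) = 2 * L" using tp_pos L_pos by (auto simp: \<kappa>1_def)
  have c1: "(\<integral>\<^sup>+ \<omega>. ennreal ((norm (grad_avg n g (svrg_output n L g \<tau> x0 \<omega>)))\<^sup>2) \<partial>svrg_space n)
      \<le> ennreal (\<kappa>1 * ((1 - \<tau>) / \<tau> * (favg n f x0 - favg n f xstar) + (1 / real n) * (L * \<tau> / (1 - \<tau>) / 2 * (norm (x0 - xstar))\<^sup>2)))"
  proof (rule S.main_bound[OF tau])
    show "continuous_on UNIV (\<lambda>y. (norm (grad_avg n g y))\<^sup>2)" using Gc by (intro continuous_intros)
    show "\<forall>y. 0 \<le> (norm (grad_avg n g y))\<^sup>2" by simp
    show "0 \<le> \<kappa>1" by (rule k1)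
    show "\<forall>y. (norm (grad_avg n g y))\<^sup>2 \<le> \<kappa>1 * ((1 + (1 - \<tau>) / \<tau>) * (favg n f y - favg n f xstar) + (norm (grad_avg n g y))\<^sup>2 / (2 * L))"
    proof
      fix y
      define u where "u = (norm (grad_avg n g y))\<^sup>2"
      have gb: "u / (2 * L) \<le> favg n f y - favg n f xstar" using S.grad_bound[of y] L_pos
        by (simp add: u_def field_simps)
      have "(1 + tp) * (u / (2 * L)) \<le> (1 + tp) * (favg n f y - favg n f xstar)"
        using gb tp_pos by (intro mult_left_mono) auto
      then have "\<kappa>1 * ((1 + tp) * (u / (2 * L)) + u / (2 * L)) \<le> \<kappa>1 * ((1 + tp) * (favg n f y - favg n f xstar) + u / (2 * L))"
        using k1 by (intro mult_left_mono) auto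
      moreover have "\<kappa>1 * ((1 + tp) * (u / (2 * L)) + u / (2 * L)) = u"
      proof -
        have "\<kappa>1 * ((1 + tp) * (u / (2 * L)) + u / (2 * L)) = (\<kappa>1 * (2 + tp)) * u / (2 * L)"
          by (simp add: algebra_simps add_divide_distrib)
        then show ?thesis using k1(2) L_pos by simp
      qed
      ultimately show "(norm (grad_avg n g y))\<^sup>2 \<le> \<kappa>1 * ((1 + (1 - \<tau>) / \<tau>) * (favg n f y - favg n f xstar) + (norm (grad_avg n g y))\<^sup>2 / (2 * L))"
        unfolding tp_def u_def by simp
    qed
  qed
  have b1: "\<kappa>1 * ((1 - \<tau>) / \<tau> * (favg n f x0 - favg n f xstar) + (1 / real n) * (L * \<tau> / (1 - \<tau>) / 2 * (norm (x0 - xstar))\<^sup>2))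
      \<le> 8 * L\<^sup>2 * R0\<^sup>2 / (5 * (sqrt (real n + 1) + 1))"
  proof -
    have "\<kappa>1 * ((1 - \<tau>) / \<tau> * (favg n f x0 - favg n f xstar) + (1 / real n) * (L * \<tau> / (1 - \<tau>) / 2 * (norm (x0 - xstar))\<^sup>2))
        \<le> \<kappa>1 * (L * Q * s / (s\<^sup>2 - 1))"
      using key k1 unfolding tp_def fs_def Q_def by (intro mult_left_mono) auto
    also have "\<dots> = (2 * s / (2 * s - 1)) * (L\<^sup>2 * Q / (s + 1))"
      using s1 unfolding \<kappa>1_def tp_s sfac by (simp add: divide_simps power2_eq_square; simp add: algebra_simps)
    also have "\<dots> \<le> (8 / 5) * (L\<^sup>2 * R0\<^sup>2 / (s + 1))"
    proof (rule mult_mono)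
      show "2 * s / (2 * s - 1) \<le> 8 / 5" using s43 s1 by (simp add: field_simps)
      show "L\<^sup>2 * Q / (s + 1) \<le> L\<^sup>2 * R0\<^sup>2 / (s + 1)"
        using QR s1 by (intro divide_right_mono mult_left_mono) auto
    qed (use s1 Q0 in auto)
    finally show ?thesis by (simp add: s_def)
  qed
  show ?thesis
  proof (intro conjI)
    show "(\<integral>\<^sup>+ \<omega>. ennreal ((norm (grad_avg n g (svrg_output n L g (1 - 1 / sqrt (real n + 1)) x0 \<omega>)))\<^sup>2) \<partial>svrg_space n)
        \<le> ennreal (8 * L\<^sup>2 * R0\<^sup>2 / (5 * (sqrt (real n + 1) + 1)))"
      using c1 b1 unfolding \<tau>_def by (auto intro: order_trans ennreal_leI)
    show "(\<integral>\<^sup>+ \<omega>. ennreal (favg n f (svrg_output n L g (1 - 1 / sqrt (real n + 1)) x0 \<omega>) - favg n f xstar) \<partial>svrg_space n)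
        \<le> ennreal (L * R0\<^sup>2 / (sqrt (real n + 1) + 1))"
      using c2 b2 unfolding \<tau>_def by (auto intro: order_trans ennreal_leI)
    show "(\<integral>\<^sup>+ \<omega>. ennreal (real n + 2 * (real (svrg_N \<omega>) + 1)) \<partial>svrg_space n) \<le> ennreal (3 * real n)"
      by (rule count_bound[OF n_pos])
  qed
qed

end
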